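(* Let $F$ be a finite group and let $N$ be a closed, normal, $\sigma$-stable subgroup of $F^{\mathbb{Z}}$ such that $N\cap F^{[\mathbb{Z}]}=\{1\}$. Then $N$ is finite and contained in the centre of $F^{\mathbb{Z}}$.
   Context: $F^{\mathbb{Z}}$ is the group of all functions $\mathbb{Z}\to F$ with pointwise multiplication and the product topology (with $F$ discrete); $F^{[\mathbb{Z}]}$ is its subgroup of finitely supported functions; $\sigma$ is the shift automorphism $\sigma(f)(n)=f(n+1)$; $N$ is $\sigma$-stable if $\sigma(N)=N$. *)

theory Defs
  imports "HOL-Analysis.Analysis" "HOL-Algebra.Coset"
begin

definition FZ :: "('a, 'b) monoid_scheme \<Rightarrow> (int \<Rightarrow> 'a) monoid" where
  "FZ F = \<lparr> carrier = {f. \<forall>n. f n \<in> carrier F},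
            mult = (\<lambda>f g n. f n \<otimes>\<^bsub>F\<^esub> g n),
            one = (\<lambda>n. \<one>\<^bsub>F\<^esub>) \<rparr>"

definition FZ_topology :: "('a, 'b) monoid_scheme \<Rightarrow> (int \<Rightarrow> 'a) topology" where
  "FZ_topology F = product_topology (\<lambda>_. discrete_topology (carrier F)) UNIV"

definition fin_supp :: "('a, 'b) monoid_scheme \<Rightarrow> (int \<Rightarrow> 'a) set" where
  "fin_supp F = {f \<in> carrier (FZ F). finite {n. f n \<noteq> \<one>\<^bsub>F\<^esub>}}"

definition shift :: "(int \<Rightarrow> 'a) \<Rightarrow> (int \<Rightarrow> 'a)" where
  "shift f = (\<lambda>n. f (n + 1))"

definition center :: "('a, 'b) monoid_scheme \<Rightarrow> 'a set" where
  "center G = {z \<in> carrier G. \<forall>g \<in> carrier G. z \<otimes>\<^bsub>G\<^esub> g = g \<otimes>\<^bsub>G\<^esub> z}"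

end

theory Submission
  imports Defs
begin


lemma top_FZ: "topspace (FZ_topology F) = {f. \<forall>n. f n \<in> carrier F}"
  by (auto simp: FZ_topology_def PiE_UNIV_domain)

lemma compact_FZ: "finite (carrier F) \<Longrightarrow> compact_space (FZ_topology F)"
  unfolding FZ_topology_def
  by (simp add: compact_space_product_topology compact_space_discrete_topology)

lemma closed_box:
  assumes "\<And>i. C i \<subseteq> carrier F"
  shows "closedin (FZ_topology F) {f. \<forall>i. f i \<in> C i}"
proof -
  have "{f. \<forall>i. f i \<in> C i} = PiE UNIV C" by (auto simp: PiE_UNIV_domain)
  then show ?thesis unfolding FZ_topology_def using assms
    by (simp add: closedin_product_topology)
qed

lemma nest_FZ:
  assumes "finite (carrier F)" "closedin (FZ_topology F) N"
    and "\<And>m::nat. \<And>i. C m i \<subseteq> carrier F"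
    and "\<And>m i. C (Suc m) i \<subseteq> C m i"
    and "\<And>m. \<exists>x\<in>N. \<forall>i. x i \<in> C m i"
  shows "\<exists>x\<in>N. \<forall>m i. x i \<in> C m i"
proof -
  define S where "S m = N \<inter> {f. \<forall>i. f i \<in> C m i}" for m
  have "(\<Inter>m. S m) \<noteq> {}"
  proof (rule compact_space_imp_nest[OF compact_FZ[OF assms(1)]])
    show "closedin (FZ_topology F) (S m)" for m
      unfolding S_def by (intro closedin_Int assms closed_box)
    show "S m \<noteq> {}" for m using assms(5)[of m] unfolding S_def by auto
    show "decseq S" unfolding decseq_def S_def
    proof (intro allI impI)
      fix m n :: nat assume "m \<le> n"
      then have "C n i \<subseteq> C m i" for i
        by (induction n rule: dec_induct) (use assms(4) in auto)
      then show "N \<inter> {f. \<forall>i. f i \<in> C n i} \<subseteq> N \<inter> {f. \<forall>i. f i \<in> C m i}" by blast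
    qed
  qed
  then show ?thesis unfolding S_def by auto
qed


locale goodN = group F for F :: "('a,'b) monoid_scheme" (structure) +
  fixes N :: "(int \<Rightarrow> 'a) set"
  assumes fin: "finite (carrier F)"
  and car: "\<And>x n. x \<in> N \<Longrightarrow> x n \<in> carrier F"
  and mul: "\<And>x y. x \<in> N \<Longrightarrow> y \<in> N \<Longrightarrow> (\<lambda>n. x n \<otimes> y n) \<in> N"
  and inv: "\<And>x. x \<in> N \<Longrightarrow> (\<lambda>n. inv (x n)) \<in> N"
  and shf: "\<And>x k. x \<in> N \<Longrightarrow> (\<lambda>n. x (n + k)) \<in> N"
  and cl: "closedin (FZ_topology F) N"
  and fs: "\<And>x. x \<in> N \<Longrightarrow> finite {n. x n \<noteq> \<one>} \<Longrightarrow> x = (\<lambda>n. \<one>)"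
begin

definition D :: "nat \<Rightarrow> 'a set" where
  "D k = {x 0 | x. x \<in> N \<and> (\<forall>n. 1 \<le> n \<and> n \<le> int k \<longrightarrow> x n = \<one>)}"

lemma D_sub: "D k \<subseteq> carrier F" unfolding D_def using car by auto

lemma D_mono: "k \<le> l \<Longrightarrow> D l \<subseteq> D k"
  unfolding D_def by auto

lemma D_stab: obtains M where "\<And>k. M \<le> k \<Longrightarrow> D k = D M"
proof -
  obtain M where M: "\<And>k. card (D M) \<le> card (D k)"
    using ex_has_least_nat[where P="\<lambda>_. True" and m="\<lambda>k. card (D k)"] by blast
  have "D k = D M" if "M \<le> k" for k
  proof -
    have "D k \<subseteq> D M" using D_mono that by blast
    moreover have "finite (D M)" using D_sub fin finite_subset by blast
    ultimately show ?thesis using M[of k] by (metis card_subset_eq card_mono antisym)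
  qed
  then show ?thesis using that by blast
qed


lemma A1:
  assumes stab: "\<And>k. M \<le> k \<Longrightarrow> D k = D M" and a: "a \<in> D M"
  shows "\<exists>r\<in>N. r 0 = a \<and> (\<forall>n\<ge>1. r n = \<one>)"
proof -
  have ac: "a \<in> carrier F" using a D_sub by blast
  define C where "C m i = (if i = 0 then {a} else if 1 \<le> i \<and> i \<le> int (M + m) then {\<one>} else carrier F)"
    for m :: nat and i :: int
  have "\<exists>x\<in>N. \<forall>m i. x i \<in> C m i"
  proof (rule nest_FZ[OF fin cl])
    show "C m i \<subseteq> carrier F" for m i using ac by (auto simp: C_def)
    show "C (Suc m) i \<subseteq> C m i" for m i using ac by (auto simp: C_def)
    show "\<exists>x\<in>N. \<forall>i. x i \<in> C m i" for m
    proof -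
      have "a \<in> D (M + m)" using stab[of "M+m"] a by simp
      then obtain x where "x \<in> N" "x 0 = a" "\<And>n. 1 \<le> n \<Longrightarrow> n \<le> int (M+m) \<Longrightarrow> x n = \<one>"
        unfolding D_def by blast
      then show ?thesis using car by (auto simp: C_def intro!: bexI[of _ x])
    qed
  qed
  then obtain x where x: "x \<in> N" "\<And>m i. x i \<in> C m i" by blast
  have "x 0 = a" using x(2)[where m=0 and i=0] by (simp add: C_def)
  moreover have "x n = \<one>" if "n \<ge> 1" for n
    using x(2)[where m="nat n" and i=n] that by (simp add: C_def)
  ultimately show ?thesis using x(1) by blast
qed


lemma Glem:
  assumes stab: "\<And>k. M \<le> k \<Longrightarrow> D k = D M"
    and v: "v \<in> N" and v1: "\<And>n. 1 \<le> n \<Longrightarrow> n \<le> int M \<Longrightarrow> v n = \<one>"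
    and K: "K \<ge> 1" and vK: "\<And>n. n \<ge> K \<Longrightarrow> v n = \<one>"
    and n1: "n \<ge> 1"
  shows "v n = \<one>"
proof -
  define C where "C m i = (if 1 - int m \<le> i \<and> i \<le> int M then {\<one>} else if i \<ge> K then {\<one>}
     else if i > int M then {v i} else carrier F)"
    for m :: nat and i :: int
  have "\<exists>x\<in>N. \<forall>m i. x i \<in> C m i"
  proof (rule nest_FZ[OF fin cl])
    show "C m i \<subseteq> carrier F" for m i using car[OF v] by (auto simp: C_def)
    show "C (Suc m) i \<subseteq> C m i" for m i using car[OF v] by (auto simp: C_def)
    show "\<exists>x\<in>N. \<forall>i. x i \<in> C m i" for m
    proof (induction m)
      case 0
      show ?case using v v1 vK car[OF v] by (auto simp: C_def intro!: bexI[of _ v])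
    next
      case (Suc m)
      then obtain l where l: "l \<in> N" "\<And>i. l i \<in> C m i" by blast
      define s where "s = (\<lambda>n. l (n + (- int m)))"
      have s: "s \<in> N" unfolding s_def by (rule shf[OF l(1)])
      have "s n = \<one>" if "1 \<le> n" "n \<le> int M" for n
        using l(2)[of "n - int m"] that by (auto simp: s_def C_def split: if_splits)
      moreover have "s 0 = l (- int m)" by (simp add: s_def)
      ultimately have "l (- int m) \<in> D M" unfolding D_def using s
        by (intro CollectI exI[of _ s]) auto
      then obtain r where r: "r \<in> N" "r 0 = l (- int m)" "\<And>n. n \<ge> 1 \<Longrightarrow> r n = \<one>"
        using A1[OF stab] by blast
      define r' where "r' = (\<lambda>n. r (n + int m))"
      have r': "r' \<in> N" unfolding r'_def by (rule shf[OF r(1)])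
      define l' where "l' = (\<lambda>n. inv (r' n) \<otimes> l n)"
      have l': "l' \<in> N" unfolding l'_def by (rule mul[OF inv[OF r'] l(1)])
      have "l' i \<in> C (Suc m) i" for i
      proof (cases "i \<ge> 1 - int m")
        case True
        then have "r' i = \<one>" using r(3) unfolding r'_def by simp
        then have "l' i = l i" unfolding l'_def using car[OF l(1)] by simp
        moreover have "C (Suc m) i = C m i" using True by (auto simp: C_def)
        ultimately show ?thesis using l(2) by simp
      next
        case False
        show ?thesis
        proof (cases "i = - int m")
          case True
          then have "l' i = \<one>" unfolding l'_def r'_def using r(2) car[OF l(1)] by simp
          then show ?thesis using True K by (simp add: C_def)
        next
          case False
          then have "C (Suc m) i = carrier F" using \<open>\<not> i \<ge> 1 - int m\<close> K by (auto simp: C_def)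
          then show ?thesis unfolding l'_def using car[OF l(1)] car[OF r'] by simp
        qed
      qed
      then show ?case using l' by blast
    qed
  qed
  then obtain l where l: "l \<in> N" "\<And>m i. l i \<in> C m i" by blast
  have l1: "l i = \<one>" if "i \<le> int M" for i
    using l(2)[where m="nat (1 - i)" and i=i] that by (auto simp: C_def split: if_splits)
  have l2: "l i = \<one>" if "i \<ge> K" for i
    using l(2)[where m=0 and i=i] l1[of i] that by (auto simp: C_def split: if_splits)
  have l3: "l i = v i" if "i > int M" "i < K" for i
    using l(2)[where m=0 and i=i] that by (auto simp: C_def split: if_splits)
  have "{n. l n \<noteq> \<one>} \<subseteq> {int M <..< K}"
  proof
    fix n assume "n \<in> {n. l n \<noteq> \<one>}"
    then have "l n \<noteq> \<one>" by simp
    then have "\<not> n \<le> int M" "\<not> K \<le> n" using l1 l2 by blast+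
    then show "n \<in> {int M <..< K}" by simp
  qed
  then have "l = (\<lambda>n. \<one>)" using fs[OF l(1)] finite_subset by blast
  then show ?thesis using l3 v1 vK n1
    by (metis linorder_not_le)
qed


lemma eq_of_div: "a \<in> carrier F \<Longrightarrow> b \<in> carrier F \<Longrightarrow> a \<otimes> inv b = \<one> \<Longrightarrow> a = b"
  by (metis inv_equality inv_closed inv_inv)

lemma Rtriv:
  assumes stab: "\<And>k. M \<le> k \<Longrightarrow> D k = D M"
    and x: "x \<in> N" and x1: "\<And>n. n \<ge> 1 \<Longrightarrow> x n = \<one>"
  shows "x t = \<one>"
proof (rule ccontr)
  assume xt: "x t \<noteq> \<one>"
  have t0: "t \<le> 0"
  proof (rule ccontr)
    assume "\<not> t \<le> 0"
    then have "t \<ge> 1" by simp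
    then have "x t = \<one>" by (rule x1)
    with xt show False by simp
  qed
  define J where "J = {.. t - int M}"
  define f where "f j = restrict (\<lambda>i. x (j + int i)) {..<M}" for j
  have "f ` J \<subseteq> PiE {..<M} (\<lambda>_. carrier F)" unfolding f_def using car[OF x]
    by (intro image_subsetI) (simp only: restrict_PiE_iff, blast)
  then have "finite (f ` J)" using finite_subset fin by (blast intro: finite_PiE)
  moreover have "infinite J" unfolding J_def by (rule infinite_Iic)
  ultimately have "\<not> inj_on f J" using finite_imageD by blast
  then obtain j1 j2 where j: "j1 \<in> J" "j2 \<in> J" "j1 \<noteq> j2" "f j1 = f j2"
    unfolding inj_on_def by blast
  obtain a b where ab: "a \<in> J" "b \<in> J" "a < b" "f a = f b"
    using j by (metis linorder_neq_iff)
  have xab: "x (a + int i) = x (b + int i)" if "i < M" for i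
    using fun_cong[OF ab(4), of i] that by (simp add: f_def)
  define p where "p = b - a"
  have p0: "p > 0" using ab(3) by (simp add: p_def)
  define w where "w = (\<lambda>n. x n \<otimes> inv (x (n + p)))"
  have w: "w \<in> N" unfolding w_def by (rule mul[OF x inv[OF shf[OF x]]])
  define v where "v = (\<lambda>n. w (n + (a - 1)))"
  have v: "v \<in> N" unfolding v_def by (rule shf[OF w])
  have aJ: "a \<le> t - int M" using ab(1) by (simp add: J_def)
  have v1: "v n = \<one>" if "1 \<le> n" "n \<le> int M" for n
  proof -
    define i where "i = nat (n - 1)"
    have i: "i < M" "n + (a - 1) = a + int i" "a + int i + p = b + int i"
      using that by (auto simp: i_def p_def)
    show ?thesis unfolding v_def w_def i(2) i(3) xab[OF i(1)] using car[OF x] by simp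
  qed
  have vK: "v n = \<one>" if "n \<ge> 2 - a" for n
    unfolding v_def w_def using that p0 x1 by simp
  have K: "2 - a \<ge> 1" using aJ t0 by simp
  have wa: "w m = \<one>" if "m \<ge> a" for m
    using Glem[OF stab v v1 K vK, of "m - (a - 1)"] that by (simp add: v_def)
  have per: "x m = x (m + p)" if "m \<ge> a" for m
    using wa[OF that] car[OF x] eq_of_div unfolding w_def by blast
  have "x t = x (t + int k * p)" for k
  proof (induction k)
    case 0 then show ?case by simp
  next
    case (Suc k)
    have "t + int k * p \<ge> a" using aJ p0 by (smt (verit) mult_nonneg_nonneg of_nat_0_le_iff)
    then have "x (t + int k * p) = x (t + int k * p + p)" by (rule per)
    then show ?case using Suc by (simp add: algebra_simps)
  qed
  moreover have "t + int (nat (1 - t)) * p \<ge> 1"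
  proof -
    have "(1 - t) * p \<ge> (1 - t) * 1"
      by (rule mult_left_mono) (use p0 t0 in auto)
    moreover have "int (nat (1 - t)) = 1 - t" using t0 by simp
    ultimately show ?thesis by simp
  qed
  ultimately show False using xt x1 by metis
qed

lemma Blem:
  assumes stab: "\<And>k. M \<le> k \<Longrightarrow> D k = D M"
    and x: "x \<in> N" and x1: "\<And>n. 1 \<le> n \<Longrightarrow> n \<le> int M \<Longrightarrow> x n = \<one>"
  shows "x 0 = \<one>"
proof -
  have "x 0 \<in> D M" unfolding D_def using x x1 by blast
  then obtain r where r: "r \<in> N" "r 0 = x 0" "\<And>n. n \<ge> 1 \<Longrightarrow> r n = \<one>"
    using A1[OF stab] by blast
  show ?thesis using Rtriv[OF stab r(1) r(3)] r(2) by metis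
qed

lemma B: "\<exists>M::nat. \<forall>x\<in>N. (\<forall>n. 1 \<le> n \<and> n \<le> int M \<longrightarrow> x n = \<one>) \<longrightarrow> x 0 = \<one>"
proof -
  obtain M where "\<And>k. M \<le> k \<Longrightarrow> D k = D M" using D_stab by blast
  then show ?thesis using Blem by blast
qed

end


lemma FZ_simps: "carrier (FZ F) = {f. \<forall>n. f n \<in> carrier F}"
  "x \<otimes>\<^bsub>FZ F\<^esub> y = (\<lambda>n. x n \<otimes>\<^bsub>F\<^esub> y n)" "\<one>\<^bsub>FZ F\<^esub> = (\<lambda>n. \<one>\<^bsub>F\<^esub>)"
  by (simp_all add: FZ_def)

lemma good_from:
  fixes F :: "('a, 'b) monoid_scheme" and N :: "(int \<Rightarrow> 'a) set"
  assumes "group F"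
    and "finite (carrier F)"
    and "N \<lhd> FZ F"
    and "closedin (FZ_topology F) N"
    and "shift ` N = N"
    and "N \<inter> fin_supp F = {\<one>\<^bsub>FZ F\<^esub>}"
  shows "goodN F N"
    and "\<And>x. x \<in> carrier (FZ F) \<Longrightarrow> inv\<^bsub>FZ F\<^esub> x = (\<lambda>n. inv\<^bsub>F\<^esub> (x n))"
proof -
  interpret G: group F by fact
  interpret NN: normal N "FZ F" by fact
  show invFZ: "inv\<^bsub>FZ F\<^esub> x = (\<lambda>n. inv\<^bsub>F\<^esub> (x n))" if "x \<in> carrier (FZ F)" for x
  proof (rule NN.inv_equality)
    show "(\<lambda>n. inv\<^bsub>F\<^esub> (x n)) \<otimes>\<^bsub>FZ F\<^esub> x = \<one>\<^bsub>FZ F\<^esub>"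
      using that unfolding FZ_simps by (intro ext) simp
    show "x \<in> carrier (FZ F)" by fact
    show "(\<lambda>n. inv\<^bsub>F\<^esub> (x n)) \<in> carrier (FZ F)" using that unfolding FZ_simps by simp
  qed
  have car: "x n \<in> carrier F" if "x \<in> N" for x n
  proof -
    have "x \<in> carrier (FZ F)" using NN.subset that by blast
    then show ?thesis unfolding FZ_simps by simp
  qed
  have sh1: "(\<lambda>n. x (n + 1)) \<in> N" if "x \<in> N" for x
  proof -
    have "shift x \<in> shift ` N" using that by (rule imageI)
    then have "shift x \<in> N" using assms(5) by simp
    then show ?thesis unfolding shift_def .
  qed
  have sh2: "(\<lambda>n. x (n - 1)) \<in> N" if "x \<in> N" for x
  proof -
    have "x \<in> shift ` N" using assms(5) that by simp
    then obtain g where "g \<in> N" "x = shift g" by (rule imageE)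
    then show ?thesis unfolding shift_def by simp
  qed
  have shn: "(\<lambda>n. x (n + int k)) \<in> N \<and> (\<lambda>n. x (n - int k)) \<in> N" if "x \<in> N" for x k
  proof (induction k)
    case 0 then show ?case using that by simp
  next
    case (Suc k)
    then have "(\<lambda>n. (\<lambda>n. x (n + int k)) (n + 1)) \<in> N" "(\<lambda>n. (\<lambda>n. x (n - int k)) (n - 1)) \<in> N"
      using sh1 sh2 by blast+
    then show ?case by (simp add: algebra_simps)
  qed
  show "goodN F N"
  proof (intro goodN.intro goodN_axioms.intro)
    show "group F" by fact
    show "finite (carrier F)" by fact
    show "x n \<in> carrier F" if "x \<in> N" for x n using car that .
    show "(\<lambda>n. x n \<otimes>\<^bsub>F\<^esub> y n) \<in> N" if "x \<in> N" "y \<in> N" for x y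
      using subgroup.m_closed[OF NN.subgroup_axioms that] by (simp add: FZ_simps)
    show "(\<lambda>n. inv\<^bsub>F\<^esub> (x n)) \<in> N" if "x \<in> N" for x
      proof -
      have "inv\<^bsub>FZ F\<^esub> x \<in> N" by (rule subgroup.m_inv_closed[OF NN.subgroup_axioms that])
      moreover have "x \<in> carrier (FZ F)" using NN.subset that by blast
      ultimately show ?thesis using invFZ by simp
    qed
    show "(\<lambda>n. x (n + k)) \<in> N" if "x \<in> N" for x k
    proof (cases "k \<ge> 0")
      case True
      have "(\<lambda>n. x (n + int (nat k))) \<in> N" using shn[OF that] by blast
      then show ?thesis using True by simp
    next
      case False
      have "(\<lambda>n. x (n - int (nat (- k)))) \<in> N" using shn[OF that] by blast
      moreover have "(\<lambda>n. x (n - int (nat (- k)))) = (\<lambda>n. x (n + k))" using False by (intro ext) simp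
      ultimately show ?thesis by simp
    qed
    show "closedin (FZ_topology F) N" by fact
    show "x = (\<lambda>n. \<one>\<^bsub>F\<^esub>)" if "x \<in> N" "finite {n. x n \<noteq> \<one>\<^bsub>F\<^esub>}" for x
    proof -
      have "x \<in> fin_supp F" unfolding fin_supp_def using that NN.subset by blast
      then have "x \<in> N \<inter> fin_supp F" using that(1) by blast
      then have "x = \<one>\<^bsub>FZ F\<^esub>" using assms(6) by blast
      then show ?thesis by (simp add: FZ_simps)
    qed
  qed
qed



definition rfl :: "(int \<Rightarrow> 'a) \<Rightarrow> (int \<Rightarrow> 'a)" where "rfl f = (\<lambda>n. f (- n))"

lemma rfl_rfl[simp]: "rfl (rfl f) = f" by (simp add: rfl_def)

lemma cont_rfl: "continuous_map (FZ_topology F) (FZ_topology F) rfl"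
  unfolding FZ_topology_def continuous_map_componentwise_UNIV rfl_def
  by (auto intro: continuous_map_product_projection)

lemma (in goodN) good_rfl: "goodN F (rfl ` N)"
proof -
  show ?thesis
  proof (intro goodN.intro goodN_axioms.intro)
    show "group F" by (rule is_group)
    show "finite (carrier F)" by (rule fin)
    show "x n \<in> carrier F" if "x \<in> rfl ` N" for x n
      using that car by (auto simp: rfl_def)
    show "(\<lambda>n. x n \<otimes> y n) \<in> rfl ` N" if xy: "x \<in> rfl ` N" "y \<in> rfl ` N" for x y
    proof -
      obtain a b where ab: "a \<in> N" "b \<in> N" "x = rfl a" "y = rfl b" using xy by blast
      have "(\<lambda>n. x n \<otimes> y n) = rfl (\<lambda>n. a n \<otimes> b n)" using ab by (simp add: rfl_def)
      then show ?thesis using mul[OF ab(1,2)] by simp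
    qed
    show "(\<lambda>n. inv (x n)) \<in> rfl ` N" if xy: "x \<in> rfl ` N" for x
    proof -
      obtain a where ab: "a \<in> N" "x = rfl a" using xy by blast
      have "(\<lambda>n. inv (x n)) = rfl (\<lambda>n. inv (a n))" using ab by (simp add: rfl_def)
      then show ?thesis using inv[OF ab(1)] by simp
    qed
    show "(\<lambda>n. x (n + k)) \<in> rfl ` N" if xy: "x \<in> rfl ` N" for x k
    proof -
      obtain a where ab: "a \<in> N" "x = rfl a" using xy by blast
      have "(\<lambda>n. x (n + k)) = rfl (\<lambda>n. a (n + - k))" using ab by (simp add: rfl_def algebra_simps)
      moreover have "(\<lambda>n. a (n + - k)) \<in> N" by (rule shf[OF ab(1)])
      ultimately show ?thesis by (metis imageI)
    qed
    have "rfl ` N = {x \<in> topspace (FZ_topology F). rfl x \<in> N}"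
    proof (intro equalityI subsetI)
      fix x assume "x \<in> rfl ` N"
      then obtain a where ab: "a \<in> N" "x = rfl a" by blast
      then show "x \<in> {x \<in> topspace (FZ_topology F). rfl x \<in> N}"
        using car[OF ab(1)] by (simp add: top_FZ rfl_def)
    next
      fix x assume "x \<in> {x \<in> topspace (FZ_topology F). rfl x \<in> N}"
      then have "rfl x \<in> N" by simp
      then have "rfl (rfl x) \<in> rfl ` N" by (rule imageI)
      then show "x \<in> rfl ` N" by simp
    qed
    then show "closedin (FZ_topology F) (rfl ` N)"
      using closedin_continuous_map_preimage[OF cont_rfl cl] by simp
    show "x = (\<lambda>n. \<one>)" if xy: "x \<in> rfl ` N" "finite {n. x n \<noteq> \<one>}" for x
    proof -
      obtain a where ab: "a \<in> N" "x = rfl a" using xy by blast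
      have "{n. a n \<noteq> \<one>} = uminus ` {n. x n \<noteq> \<one>}"
        using ab by (auto simp: rfl_def image_iff) (metis minus_minus)
      then have "finite {n. a n \<noteq> \<one>}" using xy(2) by simp
      then have "a = (\<lambda>n. \<one>)" by (rule fs[OF ab(1)])
      then show ?thesis using ab by (simp add: rfl_def)
    qed
  qed
qed



context goodN begin

lemma comm_lem:
  assumes x: "x \<in> N" and a: "a \<in> carrier F"
    and c: "(\<lambda>m. (if m = n then a else \<one>) \<otimes> x m \<otimes> inv (if m = n then a else \<one>)) \<in> N"
  shows "a \<otimes> x n = x n \<otimes> a"
proof -
  define e where "e = (\<lambda>m. (if m = n then a else \<one>) \<otimes> x m \<otimes> inv (if m = n then a else \<one>) \<otimes> inv (x m))"
  have e: "e \<in> N" unfolding e_def by (rule mul[OF c inv[OF x]])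
  have sub: "{m. e m \<noteq> \<one>} \<subseteq> {n}"
  proof
    fix m assume "m \<in> {m. e m \<noteq> \<one>}"
    then have "e m \<noteq> \<one>" by simp
    moreover have "e m = \<one>" if "m \<noteq> n"
    proof -
      have "e m = \<one> \<otimes> x m \<otimes> inv \<one> \<otimes> inv (x m)" unfolding e_def using that by simp
      also have "\<dots> = \<one>" using car[OF x] by simp
      finally show ?thesis .
    qed
    ultimately show "m \<in> {n}" by blast
  qed
  have "finite {m. e m \<noteq> \<one>}" by (rule finite_subset[OF sub]) simp
  then have "e = (\<lambda>m. \<one>)" by (rule fs[OF e])
  then have "e n = \<one>" by simp
  moreover have "e n = a \<otimes> x n \<otimes> inv a \<otimes> inv (x n)" unfolding e_def by simp
  ultimately have h0: "a \<otimes> x n \<otimes> inv a \<otimes> inv (x n) = \<one>" by simp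
  have "a \<otimes> x n \<otimes> inv a = x n" by (rule eq_of_div[OF _ _ h0]) (use a car[OF x] in simp_all)
  then have h: "x n = a \<otimes> x n \<otimes> inv a" by (rule sym)
  have iff: "x n = a \<otimes> x n \<otimes> inv a \<longleftrightarrow> a \<otimes> x n = x n \<otimes> a"
    by (rule inv_solve_right) (use a car[OF x] in simp_all)
  show ?thesis using iffD1[OF iff h] .
qed

lemma window:
  obtains W :: nat where "\<And>x m. x \<in> N \<Longrightarrow> (\<And>n. 1 \<le> n \<Longrightarrow> n \<le> int W \<Longrightarrow> x n = \<one>) \<Longrightarrow> x m = \<one>"
proof -
  obtain M1 :: nat where M1: "\<forall>x\<in>N. (\<forall>n. 1 \<le> n \<and> n \<le> int M1 \<longrightarrow> x n = \<one>) \<longrightarrow> x 0 = \<one>"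
    using B by blast
  obtain M2 :: nat where M2: "\<forall>x\<in>rfl ` N. (\<forall>n. 1 \<le> n \<and> n \<le> int M2 \<longrightarrow> x n = \<one>) \<longrightarrow> x 0 = \<one>"
    using goodN.B[OF good_rfl] by blast
  have A: "x k = \<one>" if "x \<in> N" "\<And>n. k + 1 \<le> n \<Longrightarrow> n \<le> k + int M1 \<Longrightarrow> x n = \<one>" for x k
  proof -
    have "(\<lambda>n. x (n + k)) \<in> N" by (rule shf[OF that(1)])
    moreover have "\<forall>n. 1 \<le> n \<and> n \<le> int M1 \<longrightarrow> (\<lambda>n. x (n + k)) n = \<one>"
      using that(2) by simp
    ultimately show ?thesis using M1 by fastforce
  qed
  have Bb: "x k = \<one>" if "x \<in> N" "\<And>n. k - int M2 \<le> n \<Longrightarrow> n \<le> k - 1 \<Longrightarrow> x n = \<one>" for x k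
  proof -
    have "rfl (\<lambda>n. x (n + k)) \<in> rfl ` N" by (rule imageI[OF shf[OF that(1)]])
    moreover have "\<forall>n. 1 \<le> n \<and> n \<le> int M2 \<longrightarrow> rfl (\<lambda>n. x (n + k)) n = \<one>"
      using that(2) by (simp add: rfl_def)
    ultimately have "rfl (\<lambda>n. x (n + k)) 0 = \<one>" using M2 by blast
    then show ?thesis by (simp add: rfl_def)
  qed
  define W where "W = max M1 M2"
  have "x m = \<one>" if x: "x \<in> N" and w: "\<And>n. 1 \<le> n \<Longrightarrow> n \<le> int W \<Longrightarrow> x n = \<one>" for x m
  proof -
    have up: "\<forall>n. 1 \<le> n \<and> n \<le> int W + int d \<longrightarrow> x n = \<one>" for d
    proof (induction d)
      case 0 then show ?case using w by simp
    next
      case (Suc d)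
      have "x (int W + int d + 1) = \<one>"
        by (rule Bb[OF x]) (use Suc in \<open>auto simp: W_def\<close>)
      show ?case
      proof (intro allI impI)
        fix n assume n: "1 \<le> n \<and> n \<le> int W + int (Suc d)"
        show "x n = \<one>"
        proof (cases "n = int W + int d + 1")
          case True then show ?thesis using \<open>x (int W + int d + 1) = \<one>\<close> by simp
        next
          case False then show ?thesis using n Suc by auto
        qed
      qed
    qed
    have down: "\<forall>n. 1 - int d \<le> n \<and> n \<le> int W \<longrightarrow> x n = \<one>" for d
    proof (induction d)
      case 0 then show ?case using w by simp
    next
      case (Suc d)
      have "x (- int d) = \<one>"
        by (rule A[OF x]) (use Suc in \<open>auto simp: W_def\<close>)
      show ?case
      proof (intro allI impI)
        fix n assume n: "1 - int (Suc d) \<le> n \<and> n \<le> int W"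
        show "x n = \<one>"
        proof (cases "n = - int d")
          case True then show ?thesis using \<open>x (- int d) = \<one>\<close> by simp
        next
          case False then show ?thesis using n Suc by auto
        qed
      qed
    qed
    show ?thesis
    proof (cases "m \<ge> 1")
      case True then show ?thesis using up[of "nat m"] by simp
    next
      case False then show ?thesis using down[of "nat (1 - m)"] w by (cases "m \<le> int W") auto
    qed
  qed
  then show ?thesis using that by blast
qed

lemma finiteN: "finite N"
proof -
  obtain W :: nat where W: "\<And>x m. x \<in> N \<Longrightarrow> (\<And>n. 1 \<le> n \<Longrightarrow> n \<le> int W \<Longrightarrow> x n = \<one>) \<Longrightarrow> x m = \<one>"
    using window by metis
  define f where "f x = restrict x {1..int W}" for x :: "int \<Rightarrow> 'a"
  have "inj_on f N"
  proof (rule inj_onI)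
    fix x y assume xy: "x \<in> N" "y \<in> N" "f x = f y"
    define z where "z = (\<lambda>n. x n \<otimes> inv (y n))"
    have z: "z \<in> N" unfolding z_def by (rule mul[OF xy(1) inv[OF xy(2)]])
    have "z n = \<one>" if "1 \<le> n" "n \<le> int W" for n
    proof -
      have "x n = y n" using fun_cong[OF xy(3), of n] that by (simp add: f_def)
      then show ?thesis unfolding z_def using car[OF xy(2)] by simp
    qed
    then have "z m = \<one>" for m using W[OF z] by blast
    then show "x = y" using eq_of_div car[OF xy(1)] car[OF xy(2)] unfolding z_def by blast
  qed
  moreover have "f ` N \<subseteq> PiE {1..int W} (\<lambda>_. carrier F)"
    unfolding f_def using car by (intro image_subsetI) (simp only: restrict_PiE_iff, blast)
  then have "finite (f ` N)" using finite_subset fin by (blast intro: finite_PiE)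
  ultimately show ?thesis using finite_imageD by blast
qed

end


theorem lemma6p7:
  fixes F :: "('a, 'b) monoid_scheme" and N :: "(int \<Rightarrow> 'a) set"
  assumes "group F"
    and "finite (carrier F)"
    and "N \<lhd> FZ F"
    and "closedin (FZ_topology F) N"
    and "shift ` N = N"
    and "N \<inter> fin_supp F = {\<one>\<^bsub>FZ F\<^esub>}"
  shows "finite N \<and> N \<subseteq> center (FZ F)"
proof -
  have g: "goodN F N" by (rule good_from(1)[OF assms])
  have invFZ: "\<And>x. x \<in> carrier (FZ F) \<Longrightarrow> inv\<^bsub>FZ F\<^esub> x = (\<lambda>n. inv\<^bsub>F\<^esub> (x n))"
    by (rule good_from(2)[OF assms])
  interpret NN: normal N "FZ F" by fact
  have "finite N" by (rule goodN.finiteN[OF g])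
  moreover have "N \<subseteq> center (FZ F)"
  proof
    fix x assume x: "x \<in> N"
    have xc: "x \<in> carrier (FZ F)" using NN.subset x by blast
    have "x \<otimes>\<^bsub>FZ F\<^esub> h = h \<otimes>\<^bsub>FZ F\<^esub> x" if h: "h \<in> carrier (FZ F)" for h
    proof -
      have "x n \<otimes>\<^bsub>F\<^esub> h n = h n \<otimes>\<^bsub>F\<^esub> x n" for n
      proof -
        have hn: "h n \<in> carrier F" using h unfolding FZ_simps by simp
        define d where "d = (\<lambda>m. if m = n then h n else \<one>\<^bsub>F\<^esub>)"
        have dc: "d \<in> carrier (FZ F)"
          using hn monoid.one_closed[OF group.is_monoid[OF assms(1)]] unfolding d_def FZ_simps by auto
        have dinv: "inv\<^bsub>FZ F\<^esub> d = (\<lambda>m. inv\<^bsub>F\<^esub> (d m))" by (rule invFZ[OF dc])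
        have inN: "d \<otimes>\<^bsub>FZ F\<^esub> x \<otimes>\<^bsub>FZ F\<^esub> inv\<^bsub>FZ F\<^esub> d \<in> N" by (rule NN.inv_op_closed2[OF dc x])
        have eq: "d \<otimes>\<^bsub>FZ F\<^esub> x \<otimes>\<^bsub>FZ F\<^esub> inv\<^bsub>FZ F\<^esub> d =
           (\<lambda>m. (if m = n then h n else \<one>\<^bsub>F\<^esub>) \<otimes>\<^bsub>F\<^esub> x m \<otimes>\<^bsub>F\<^esub> inv\<^bsub>F\<^esub> (if m = n then h n else \<one>\<^bsub>F\<^esub>))"
          unfolding dinv unfolding FZ_simps d_def by simp
        have mem: "(\<lambda>m. (if m = n then h n else \<one>\<^bsub>F\<^esub>) \<otimes>\<^bsub>F\<^esub> x m \<otimes>\<^bsub>F\<^esub> inv\<^bsub>F\<^esub> (if m = n then h n else \<one>\<^bsub>F\<^esub>)) \<in> N"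
          using inN unfolding eq .
        have "h n \<otimes>\<^bsub>F\<^esub> x n = x n \<otimes>\<^bsub>F\<^esub> h n" by (rule goodN.comm_lem[OF g x hn mem])
        then show ?thesis by (rule sym)
      qed
      then show ?thesis unfolding FZ_simps by (intro ext)
    qed
    then show "x \<in> center (FZ F)" unfolding center_def using xc by blast
  qed
  ultimately show ?thesis by blast
qed

end
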